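(* Let $S\subseteq[4]$ be nonempty, let $d_1\in\{1,2\}$, and let real numbers $x_{k,j}$ with $0\le x_{k,j}\le\frac12$ be given for $1\le k\le d_1$ and $j\in S$. For $j\in S$ define $$f_j=\frac{\prod_{k=1}^{d_1}(1-x_{k,j})}{\sum_{w\in S}\prod_{k=1}^{d_1}(1-x_{k,w})}.$$ Then for every $i,j\in S$ it holds that $\frac14\le f_i/f_j\le 4$ and $f_i\ge\frac1{13}$. *)

theory Defs
  imports Complex_Main
begin

definition fval :: "nat set \<Rightarrow> nat \<Rightarrow> (nat \<Rightarrow> nat \<Rightarrow> real) \<Rightarrow> nat \<Rightarrow> real" where
  "fval S d1 x j = (\<Prod>k=1..d1. 1 - x k j) / (\<Sum>w\<in>S. \<Prod>k=1..d1. 1 - x k w)"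

end

theory Submission
  imports Defs
begin

theorem proposition16:
  fixes S :: "nat set" and d1 :: nat and x :: "nat \<Rightarrow> nat \<Rightarrow> real"
  assumes "S \<subseteq> {1..4}" and "S \<noteq> {}"
    and "d1 \<in> {1, 2}"
    and "\<And>k j. k \<in> {1..d1} \<Longrightarrow> j \<in> S \<Longrightarrow> 0 \<le> x k j \<and> x k j \<le> 1/2"
  shows "\<forall>i\<in>S. \<forall>j\<in>S. 1/4 \<le> fval S d1 x i / fval S d1 x j
            \<and> fval S d1 x i / fval S d1 x j \<le> 4 \<and> fval S d1 x i \<ge> 1/13"
proof -
  define p where "p j = (\<Prod>k=1..d1. 1 - x k j)" for j
  have pb: "1/4 \<le> p j \<and> p j \<le> 1" if j: "j \<in> S" for j
  proof (cases "d1 = 1")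
    case True
    then have "p j = 1 - x 1 j" by (simp add: p_def)
    moreover have "0 \<le> x 1 j \<and> x 1 j \<le> 1/2" using assms(4)[of 1 j] j True by auto
    ultimately show ?thesis by auto
  next
    case False
    then have d: "d1 = 2" using assms(3) by auto
    have e: "(\<Prod>k=1..2. 1 - x k j) = (1 - x 1 j) * (1 - x 2 j)"
      by (simp add: numeral_2_eq_2 atLeastAtMostSuc_conv)
    have "p j = (1 - x 1 j) * (1 - x 2 j)" unfolding p_def d e by simp
    moreover have "0 \<le> x 1 j \<and> x 1 j \<le> 1/2" using assms(4)[of 1 j] j d by auto
    moreover have "0 \<le> x 2 j \<and> x 2 j \<le> 1/2" using assms(4)[of 2 j] j d by auto
    moreover have "(1/2::real) * (1/2) \<le> (1 - x 1 j) * (1 - x 2 j)"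
      using calculation(2,3) by (intro mult_mono) auto
    moreover have "(1 - x 1 j) * (1 - x 2 j) \<le> 1 * 1"
      using calculation(2,3) by (intro mult_mono) auto
    ultimately show ?thesis by simp
  qed
  have pnn: "0 \<le> p j" if "j \<in> S" for j using pb[OF that] by linarith
  have fin: "finite S" using assms(1) finite_subset by blast
  define T where "T = (\<Sum>w\<in>S. p w)"
  have fv: "fval S d1 x j = p j / T" for j by (simp add: fval_def p_def T_def)
  show ?thesis
  proof (intro ballI conjI)
    fix i j assume i: "i \<in> S" and j: "j \<in> S"
    have Tp: "T \<ge> p i" unfolding T_def
      using i fin by (intro member_le_sum) (auto dest!: pnn)
    have Tpos: "T > 0" using Tp pb[OF i] by auto
    have r: "fval S d1 x i / fval S d1 x j = p i / p j" using Tpos pb[OF j] by (simp add: fv)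
    have pi: "1/4 \<le> p i" "p i \<le> 1" and pj: "1/4 \<le> p j" "p j \<le> 1" using pb i j by auto
    show "1/4 \<le> fval S d1 x i / fval S d1 x j" unfolding r using pi pj
      by (simp add: field_simps)
    show "fval S d1 x i / fval S d1 x j \<le> 4" unfolding r using pi pj
      by (simp add: field_simps)
    have cS: "card (S - {i}) \<le> 3"
    proof -
      have "card S \<le> 4" using card_mono[OF _ assms(1)] by simp
      then show ?thesis using i fin by (simp add: card_Diff_singleton)
    qed
    have "T = p i + (\<Sum>w\<in>S-{i}. p w)" unfolding T_def using fin i by (simp add: sum.remove)
    also have "(\<Sum>w\<in>S-{i}. p w) \<le> (\<Sum>w\<in>S-{i}. 1)" using pb by (intro sum_mono) auto
    also have "\<dots> \<le> 3" using cS by simp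
    finally have "T \<le> p i + 3" by simp
    then show "fval S d1 x i \<ge> 1/13" unfolding fv using Tpos pi
      by (simp add: field_simps)
  qed
qed

end
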